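(* Let $\mathcal{V}$ and $\mathcal{W}$ be quaternionic two-sided Banach algebras with unit and let $\mathcal{A}:\mathcal{V}\to\mathcal{W}$ be a continuous isomorphism. Then for all $v\in\mathcal{V}$, $$B_{S,\partial}(v)=B_{S,\partial}(\mathcal{A}(v))=\bigcup_{c\in\mathcal{A}^{-1}(0)}B_{S,\partial}(v+c).$$
   Context: $\mathbb{H}$ denotes the quaternions, $Re(q)$ the real part and $|q|$ the norm of $q$. A quaternionic two-sided Banach algebra with unit is a two-sided $\mathbb{H}$-vector space with an associative product satisfying $x(y+z)=xy+xz$, $(x+y)z=xz+yz$, $q(xy)=(qx)y$, $(xy)q=x(yq)$, complete for a norm with $\|qx\|=|q|\|x\|=\|xq\|$, $\|xy\|\le\|x\|\|y\|$, and with unit $1\ne0$ of norm $1$. A homomorphism is additive, multiplicative, $\mathbb{H}$-linear on both sides and unital; an isomorphism is a bijective homomorphism. For an element $v$ of such an algebra $\mathcal{V}$, $R_q(v)=v^2-2Re(q)v+|q|^21_{\mathcal{V}}$ and $B_{S,\partial}(v)=\{q\in\mathbb{H}: R_q(v)\in\partial(\mathcal{V}\setminus\mathcal{V}^{-1})\}$, where $\mathcal{V}^{-1}$ is the set of invertible elements and $\partial$ denotes topological boundary in $\mathcal{V}$ (and analogously in $\mathcal{W}$). *)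

theory Defs
  imports Main "HOL.Real" "HOL.NthRoot"
begin

datatype quat = Quat (qRe: real) (qIm1: real) (qIm2: real) (qIm3: real)

definition qadd :: "quat \<Rightarrow> quat \<Rightarrow> quat" where
  "qadd p q = Quat (qRe p + qRe q) (qIm1 p + qIm1 q) (qIm2 p + qIm2 q) (qIm3 p + qIm3 q)"

definition qmul :: "quat \<Rightarrow> quat \<Rightarrow> quat" where
  "qmul p q = Quat
     (qRe p * qRe q - qIm1 p * qIm1 q - qIm2 p * qIm2 q - qIm3 p * qIm3 q)
     (qRe p * qIm1 q + qIm1 p * qRe q + qIm2 p * qIm3 q - qIm3 p * qIm2 q)
     (qRe p * qIm2 q - qIm1 p * qIm3 q + qIm2 p * qRe q + qIm3 p * qIm1 q)
     (qRe p * qIm3 q + qIm1 p * qIm2 q - qIm2 p * qIm1 q + qIm3 p * qRe q)"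

definition qone :: quat where "qone = Quat 1 0 0 0"

definition qof_real :: "real \<Rightarrow> quat" where "qof_real r = Quat r 0 0 0"

definition qnorm :: "quat \<Rightarrow> real" where
  "qnorm q = sqrt ((qRe q)\<^sup>2 + (qIm1 q)\<^sup>2 + (qIm2 q)\<^sup>2 + (qIm3 q)\<^sup>2)"

record 'a qalg =
  add  :: "'a \<Rightarrow> 'a \<Rightarrow> 'a"
  zero :: 'a
  neg  :: "'a \<Rightarrow> 'a"
  mul  :: "'a \<Rightarrow> 'a \<Rightarrow> 'a"
  one  :: 'a
  lsc  :: "quat \<Rightarrow> 'a \<Rightarrow> 'a"   \<comment> \<open>lsc q x = q x\<close>
  rsc  :: "quat \<Rightarrow> 'a \<Rightarrow> 'a"   \<comment> \<open>rsc q x = x q\<close>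
  nrm  :: "'a \<Rightarrow> real"

definition qdist :: "'a qalg \<Rightarrow> 'a \<Rightarrow> 'a \<Rightarrow> real" where
  "qdist A x y = nrm A (add A x (neg A y))"

definition qbanach_alg :: "'a qalg \<Rightarrow> bool" where
  "qbanach_alg A \<longleftrightarrow>
     \<comment> \<open>abelian group\<close>
     (\<forall>x y z. add A (add A x y) z = add A x (add A y z)) \<and>
     (\<forall>x y. add A x y = add A y x) \<and>
     (\<forall>x. add A x (zero A) = x) \<and>
     (\<forall>x. add A x (neg A x) = zero A) \<and>
     \<comment> \<open>left H-vector space\<close>
     (\<forall>p q x. lsc A (qadd p q) x = add A (lsc A p x) (lsc A q x)) \<and>
     (\<forall>q x y. lsc A q (add A x y) = add A (lsc A q x) (lsc A q y)) \<and>
     (\<forall>p q x. lsc A (qmul p q) x = lsc A p (lsc A q x)) \<and>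
     (\<forall>x. lsc A qone x = x) \<and>
     \<comment> \<open>right H-vector space\<close>
     (\<forall>p q x. rsc A (qadd p q) x = add A (rsc A p x) (rsc A q x)) \<and>
     (\<forall>q x y. rsc A q (add A x y) = add A (rsc A q x) (rsc A q y)) \<and>
     (\<forall>p q x. rsc A (qmul p q) x = rsc A q (rsc A p x)) \<and>
     (\<forall>x. rsc A qone x = x) \<and>
     \<comment> \<open>two-sided: (q x) p = q (x p)\<close>
     (\<forall>p q x. rsc A p (lsc A q x) = lsc A q (rsc A p x)) \<and>
     \<comment> \<open>associative product, distributive\<close>
     (\<forall>x y z. mul A (mul A x y) z = mul A x (mul A y z)) \<and>
     (\<forall>x y z. mul A x (add A y z) = add A (mul A x y) (mul A x z)) \<and>
     (\<forall>x y z. mul A (add A x y) z = add A (mul A x z) (mul A y z)) \<and>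
     (\<forall>q x y. lsc A q (mul A x y) = mul A (lsc A q x) y) \<and>
     (\<forall>q x y. rsc A q (mul A x y) = mul A x (rsc A q y)) \<and>
     \<comment> \<open>unit\<close>
     (\<forall>x. mul A (one A) x = x \<and> mul A x (one A) = x) \<and>
     one A \<noteq> zero A \<and>
     \<comment> \<open>norm\<close>
     (\<forall>x. nrm A x = 0 \<longleftrightarrow> x = zero A) \<and>
     (\<forall>x y. nrm A (add A x y) \<le> nrm A x + nrm A y) \<and>
     (\<forall>q x. nrm A (lsc A q x) = qnorm q * nrm A x) \<and>
     (\<forall>q x. nrm A (rsc A q x) = qnorm q * nrm A x) \<and>
     (\<forall>x y. nrm A (mul A x y) \<le> nrm A x * nrm A y) \<and>
     nrm A (one A) = 1 \<and>
     \<comment> \<open>completeness\<close>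
     (\<forall>s :: nat \<Rightarrow> 'a.
        (\<forall>e>0. \<exists>N. \<forall>m\<ge>N. \<forall>n\<ge>N. qdist A (s m) (s n) < e) \<longrightarrow>
        (\<exists>l. \<forall>e>0. \<exists>N. \<forall>n\<ge>N. qdist A (s n) l < e))"

definition qinvertibles :: "'a qalg \<Rightarrow> 'a set" where
  "qinvertibles A = {x. \<exists>y. mul A x y = one A \<and> mul A y x = one A}"

definition qboundary :: "'a qalg \<Rightarrow> 'a set \<Rightarrow> 'a set" where
  "qboundary A S = {x. \<forall>e>0. (\<exists>y\<in>S. qdist A y x < e) \<and> (\<exists>y. y \<notin> S \<and> qdist A y x < e)}"

definition qRq :: "'a qalg \<Rightarrow> quat \<Rightarrow> 'a \<Rightarrow> 'a" where
  "qRq A q v = add A (add A (mul A v v) (neg A (lsc A (qof_real (2 * qRe q)) v)))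
                     (lsc A (qof_real ((qnorm q)\<^sup>2)) (one A))"

definition BSd :: "'a qalg \<Rightarrow> 'a \<Rightarrow> quat set" where
  "BSd A v = {q. qRq A q v \<in> qboundary A (UNIV - qinvertibles A)}"

definition qhom :: "'a qalg \<Rightarrow> 'b qalg \<Rightarrow> ('a \<Rightarrow> 'b) \<Rightarrow> bool" where
  "qhom V W f \<longleftrightarrow>
     (\<forall>x y. f (add V x y) = add W (f x) (f y)) \<and>
     (\<forall>x y. f (mul V x y) = mul W (f x) (f y)) \<and>
     (\<forall>q x. f (lsc V q x) = lsc W q (f x)) \<and>
     (\<forall>q x. f (rsc V q x) = rsc W q (f x)) \<and>
     f (one V) = one W"

definition qiso :: "'a qalg \<Rightarrow> 'b qalg \<Rightarrow> ('a \<Rightarrow> 'b) \<Rightarrow> bool" where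
  "qiso V W f \<longleftrightarrow> qhom V W f \<and> bij f"

definition qcontinuous :: "'a qalg \<Rightarrow> 'b qalg \<Rightarrow> ('a \<Rightarrow> 'b) \<Rightarrow> bool" where
  "qcontinuous V W f \<longleftrightarrow>
     (\<forall>x. \<forall>e>0. \<exists>d>0. \<forall>y. qdist V y x < d \<longrightarrow> qdist W (f y) (f x) < e)"

end

theory Submission
  imports Defs "HOL-Analysis.Analysis"
begin


lemma qof_real_add: "qadd (qof_real r) (qof_real s) = qof_real (r+s)"
  by (simp add: qadd_def qof_real_def)
lemma qof_real_mul: "qmul (qof_real r) (qof_real s) = qof_real (r * s)"
  by (simp add: qmul_def qof_real_def)
lemma qone_real: "qone = qof_real 1" by (simp add: qone_def qof_real_def)
lemma qnorm_real: "qnorm (qof_real r) = \<bar>r\<bar>" by (simp add: qnorm_def qof_real_def)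

locale qba = fixes A :: "'a qalg" assumes ax: "qbanach_alg A"
begin

abbreviation pl (infixl "+\<^sub>A" 65) where "pl \<equiv> add A"
abbreviation mn (infixl "-\<^sub>A" 65) where "mn x y \<equiv> add A x (neg A y)"
definition sc :: "real \<Rightarrow> 'a \<Rightarrow> 'a" where "sc r x = lsc A (qof_real r) x"

lemma assoc: "(x +\<^sub>A y) +\<^sub>A z = x +\<^sub>A (y +\<^sub>A z)" using ax unfolding qbanach_alg_def by (elim conjE) blast
lemma comm: "x +\<^sub>A y = y +\<^sub>A x" using ax unfolding qbanach_alg_def by (elim conjE) blast
lemma zr: "x +\<^sub>A zero A = x" using ax unfolding qbanach_alg_def by (elim conjE) blast
lemma zl: "zero A +\<^sub>A x = x" using zr comm by metis
lemma negr: "x +\<^sub>A neg A x = zero A" using ax unfolding qbanach_alg_def by (elim conjE) blast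
lemma negl: "neg A x +\<^sub>A x = zero A" using negr comm by metis
lemma lcomm: "x +\<^sub>A (y +\<^sub>A z) = y +\<^sub>A (x +\<^sub>A z)" by (metis assoc comm)
lemma cancel: "x +\<^sub>A y = x +\<^sub>A z \<Longrightarrow> y = z"
  by (metis assoc negl zl)
lemma neg_unique: "x +\<^sub>A y = zero A \<Longrightarrow> neg A x = y"
  by (metis cancel negr)
lemma neg_neg: "neg A (neg A x) = x" by (metis neg_unique negl)
lemma neg_add: "neg A (x +\<^sub>A y) = neg A x +\<^sub>A neg A y"
  by (rule neg_unique) (metis assoc lcomm negr zr)
lemma neg_zero: "neg A (zero A) = zero A" by (metis neg_unique zr)
lemma sub_eq0: "x -\<^sub>A y = zero A \<longleftrightarrow> x = y"
  by (metis neg_neg neg_unique negr)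

lemma sc_add: "sc (r+s) x = sc r x +\<^sub>A sc s x"
  using ax unfolding qbanach_alg_def sc_def by (elim conjE) (metis qof_real_add)
lemma sc_addv: "sc r (x +\<^sub>A y) = sc r x +\<^sub>A sc r y"
  using ax unfolding qbanach_alg_def sc_def by (elim conjE) blast
lemma sc_mul: "sc (r * s) x = sc r (sc s x)"
  using ax unfolding qbanach_alg_def sc_def by (elim conjE) (metis qof_real_mul)
lemma sc_one: "sc 1 x = x"
  using ax unfolding qbanach_alg_def sc_def by (elim conjE) (metis qone_real)
lemma nrm_sc: "nrm A (sc r x) = \<bar>r\<bar> * nrm A x"
  using ax unfolding qbanach_alg_def sc_def by (elim conjE) (metis qnorm_real)
lemma nrm0: "nrm A x = 0 \<longleftrightarrow> x = zero A" using ax unfolding qbanach_alg_def by (elim conjE) simp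
lemma tri: "nrm A (x +\<^sub>A y) \<le> nrm A x + nrm A y" using ax unfolding qbanach_alg_def by (elim conjE) simp
lemma sc_zero: "sc 0 x = zero A" using nrm_sc[of 0 x] nrm0 by simp
lemma neg_sc: "neg A x = sc (-1) x"
  by (rule neg_unique) (metis sc_add sc_one sc_zero add.right_inverse)
lemma nrm_neg: "nrm A (neg A x) = nrm A x" by (simp add: neg_sc nrm_sc)
lemma nrm_nonneg: "0 \<le> nrm A x"
proof -
  have "nrm A (x +\<^sub>A neg A x) \<le> nrm A x + nrm A (neg A x)" by (rule tri)
  then show ?thesis using nrm0[of "zero A"] by (simp add: negr nrm_neg)
qed
lemma nrm_zero[simp]: "nrm A (zero A) = 0" using nrm0 by simp
lemma sub_comm: "nrm A (x -\<^sub>A y) = nrm A (y -\<^sub>A x)"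
  by (metis neg_add neg_neg comm nrm_neg)
lemma tri_sub: "nrm A (x -\<^sub>A z) \<le> nrm A (x -\<^sub>A y) + nrm A (y -\<^sub>A z)"
proof -
  have "x -\<^sub>A z = (x -\<^sub>A y) +\<^sub>A (y -\<^sub>A z)"
    by (metis assoc negl zl)
  then show ?thesis using tri by metis
qed
lemma sc_neg: "sc r (neg A x) = neg A (sc r x)"
  by (metis neg_sc sc_mul mult.commute)
lemma sc_sub: "sc r (x -\<^sub>A y) = sc r x -\<^sub>A sc r y" by (simp add: sc_addv sc_neg)
lemma sc_inv: "r \<noteq> 0 \<Longrightarrow> sc (1/r) (sc r x) = x" by (simp flip: sc_mul add: sc_one)

lemma ms: "Metric_space UNIV (qdist A)"
  apply unfold_locales
  apply (simp_all add: qdist_def nrm_nonneg sub_eq0 nrm0 tri_sub)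
  using sub_comm by blast

lemma complete: fixes s :: "nat \<Rightarrow> 'a" assumes "(\<forall>e>0. \<exists>N. \<forall>m\<ge>N. \<forall>n\<ge>N. nrm A (s m -\<^sub>A s n) < e)"
  shows "(\<exists>l. \<forall>e>0. \<exists>N. \<forall>n\<ge>N. nrm A (s n -\<^sub>A l) < e)"
proof -
  have "\<forall>s :: nat \<Rightarrow> 'a.
        (\<forall>e>0. \<exists>N. \<forall>m\<ge>N. \<forall>n\<ge>N. qdist A (s m) (s n) < e) \<longrightarrow>
        (\<exists>l. \<forall>e>0. \<exists>N. \<forall>n\<ge>N. qdist A (s n) l < e)"
    using ax unfolding qbanach_alg_def by (elim conjE) assumption
  from this[rule_format, of s] assms show ?thesis unfolding qdist_def by blast
qed

end



context qba begin
lemma canc1: "x +\<^sub>A (neg A x +\<^sub>A z) = z" by (metis assoc negr zl)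
lemma canc2: "neg A x +\<^sub>A (x +\<^sub>A z) = z" by (metis assoc negl zl)
lemma canc3: "x +\<^sub>A (y +\<^sub>A (neg A x +\<^sub>A z)) = y +\<^sub>A z" by (metis lcomm canc1)
lemma canc4: "neg A x +\<^sub>A (y +\<^sub>A (x +\<^sub>A z)) = y +\<^sub>A z" by (metis lcomm canc2)
lemma canc5: "x +\<^sub>A (y +\<^sub>A neg A x) = y" by (metis lcomm negr zr)
lemma canc6: "neg A x +\<^sub>A (y +\<^sub>A x) = y" by (metis lcomm negl zr)
lemmas gsimps = assoc comm lcomm neg_add neg_neg canc1 canc2 canc3 canc4 canc5 canc6 negr negl zr zl
lemma id1: "(a -\<^sub>A b) -\<^sub>A y = (a -\<^sub>A (c +\<^sub>A y)) -\<^sub>A (b -\<^sub>A c)"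
  by (simp add: gsimps)
lemma id2: "(y -\<^sub>A u) +\<^sub>A t = y -\<^sub>A (u -\<^sub>A t)" by (simp add: gsimps)
lemma id3: "(s +\<^sub>A x) -\<^sub>A t = (s -\<^sub>A t) +\<^sub>A x" by (simp add: gsimps)
lemma id4: "y -\<^sub>A (y -\<^sub>A u) = u" by (simp add: gsimps)
lemma id5: "x -\<^sub>A zero A = x" by (metis neg_zero zr)
end



locale qba2 = V: qba V + W: qba W for V :: "'v qalg" and W :: "'w qalg" +
  fixes T :: "'v \<Rightarrow> 'w"
  assumes hom: "qhom V W T" and bijT: "bij T" and contT: "qcontinuous V W T"
begin

lemma T_add: "T (add V x y) = add W (T x) (T y)" using hom by (simp add: qhom_def)
lemma T_zero: "T (zero V) = zero W"
proof -
  have "add W (T (zero V)) (T (zero V)) = add W (T (zero V)) (zero W)"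
    by (simp add: T_add[symmetric] V.zr W.zr)
  then show ?thesis by (rule W.cancel)
qed
lemma T_neg: "T (neg V x) = neg W (T x)"
  by (rule W.neg_unique[symmetric]) (simp add: T_add[symmetric] T_zero V.negr)
lemma T_sub: "T (add V x (neg V y)) = add W (T x) (neg W (T y))" by (simp add: T_add T_neg)
lemma T_sc: "T (V.sc r x) = W.sc r (T x)" using hom by (simp add: qhom_def V.sc_def W.sc_def)

lemma step1: "\<exists>K>0. \<forall>y. \<forall>\<epsilon>>0. \<exists>x. nrm V x \<le> K * nrm W y \<and> nrm W (add W (T x) (neg W y)) < \<epsilon>"
proof -
  interpret MW: Metric_space UNIV "qdist W" by (rule W.ms)
  have mc: MW.mcomplete
    unfolding MW.mcomplete_def MW.MCauchy_def MW.limitin_metric eventually_sequentially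
  proof (intro allI impI)
    fix \<sigma> :: "nat \<Rightarrow> 'w"
    assume "range \<sigma> \<subseteq> UNIV \<and> (\<forall>\<epsilon>>0. \<exists>N. \<forall>n n'. N \<le> n \<longrightarrow> N \<le> n' \<longrightarrow> qdist W (\<sigma> n) (\<sigma> n') < \<epsilon>)"
    then have "\<forall>e>0. \<exists>N. \<forall>m\<ge>N. \<forall>n\<ge>N. nrm W (add W (\<sigma> m) (neg W (\<sigma> n))) < e"
      unfolding qdist_def by meson
    from W.complete[OF this] obtain l where l: "\<forall>e>0. \<exists>N. \<forall>n\<ge>N. nrm W (add W (\<sigma> n) (neg W l)) < e" by (elim exE)
    then show "\<exists>x. x \<in> UNIV \<and> (\<forall>\<epsilon>>0. \<exists>N. \<forall>n\<ge>N. \<sigma> n \<in> UNIV \<and> qdist W (\<sigma> n) x < \<epsilon>)"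
      unfolding qdist_def using l by auto
  qed
  define S where "S n = T ` {x. nrm V x \<le> real n}" for n :: nat
  define F where "F n = MW.mtopology closure_of S n" for n
  have "\<exists>n. MW.mtopology interior_of F n \<noteq> {}"
  proof (rule ccontr)
    assume "\<not> ?thesis"
    then have "MW.mtopology interior_of \<Union>(range F) = {}"
      by (intro MW.metric_Baire_category_alt mc) (auto simp: F_def)
    moreover have "\<Union>(range F) = UNIV"
    proof -
      have "y \<in> \<Union>(range F)" for y
      proof -
        obtain x where x: "y = T x" using bijT unfolding bij_def surj_def by blast
        define n where "n = nat \<lceil>nrm V x\<rceil>"
        have "nrm V x \<le> real n" unfolding n_def by linarith
        then have "y \<in> S n" using x S_def by blast
        then have "y \<in> F n" unfolding F_def using closure_of_subset[of "S n" MW.mtopology] by auto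
        then show ?thesis by blast
      qed
      then show ?thesis by blast
    qed
    ultimately show False using interior_of_topspace[of MW.mtopology] MW.topspace_mtopology by simp
  qed
  then obtain n y0 where y0: "y0 \<in> MW.mtopology interior_of F n" by blast
  then obtain r where r: "r > 0" "MW.mball y0 r \<subseteq> F n"
    by (meson MW.openin_mtopology interior_of_subset openin_interior_of subset_trans)
  have approx: "\<exists>x. nrm V x \<le> real n \<and> qdist W z (T x) < \<epsilon>" if "qdist W y0 z < r" "\<epsilon> > 0" for z \<epsilon>
  proof -
    have "z \<in> F n" using r that by auto
    then have "\<exists>w \<in> S n. w \<in> MW.mball z \<epsilon>" using that unfolding F_def MW.metric_closure_of by blast
    then show ?thesis unfolding S_def by auto
  qed
  have base: "\<exists>x. nrm V x \<le> 2 * real n \<and> nrm W (add W (T x) (neg W y)) < \<epsilon>"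
    if yr: "nrm W y < r" and eps: "\<epsilon> > 0" for y \<epsilon>
  proof -
    have "qdist W y0 y0 < r" using r by (simp add: qdist_def W.negr)
    then obtain x0 where x0: "nrm V x0 \<le> real n" "qdist W y0 (T x0) < \<epsilon>/2"
      using approx[of y0 "\<epsilon>/2"] eps by auto
    have "add W y0 (neg W (add W y0 y)) = neg W y" by (simp add: W.gsimps)
    then have "qdist W y0 (add W y0 y) < r" using yr by (simp add: qdist_def W.nrm_neg)
    then obtain x1 where x1: "nrm V x1 \<le> real n" "qdist W (add W y0 y) (T x1) < \<epsilon>/2"
      using approx[of "add W y0 y" "\<epsilon>/2"] eps by auto
    define x where "x = add V x1 (neg V x0)"
    have "nrm V x \<le> nrm V x1 + nrm V x0" unfolding x_def using V.tri[of x1 "neg V x0"] V.nrm_neg[of x0] by linarith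
    moreover have eq: "add W (T x) (neg W y) = add W (add W (T x1) (neg W (add W y0 y))) (neg W (add W (T x0) (neg W y0)))"
      unfolding x_def T_sub by (rule W.id1)
    have "nrm W (add W (T x) (neg W y)) \<le> nrm W (add W (T x1) (neg W (add W y0 y))) + nrm W (add W (T x0) (neg W y0))"
      unfolding eq using W.tri[of "add W (T x1) (neg W (add W y0 y))" "neg W (add W (T x0) (neg W y0))"]
        W.nrm_neg[of "add W (T x0) (neg W y0)"] by linarith
    moreover have "nrm W (add W (T x1) (neg W (add W y0 y))) < \<epsilon>/2" using x1(2) W.sub_comm[of "add W y0 y" "T x1"] unfolding qdist_def by linarith
    moreover have "nrm W (add W (T x0) (neg W y0)) < \<epsilon>/2" using x0(2) W.sub_comm[of y0 "T x0"] unfolding qdist_def by linarith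
    ultimately show ?thesis using x0 x1 by (intro exI[of _ x]) auto
  qed
  define K where "K = (4 * real n + 1) / r"
  have "K > 0" using r by (simp add: K_def)
  moreover have "\<exists>x. nrm V x \<le> K * nrm W y \<and> nrm W (add W (T x) (neg W y)) < \<epsilon>" if eps: "\<epsilon> > 0" for y \<epsilon>
  proof (cases "y = zero W")
    case True
    then show ?thesis using that by (intro exI[of _ "zero V"]) (simp add: T_zero W.negr)
  next
    case False
    define Y where "Y = nrm W y"
    have Y: "Y > 0" using False W.nrm0[of y] W.nrm_nonneg[of y] unfolding Y_def by linarith
    define s where "s = r / (2 * Y)"
    have s: "s > 0" using r Y by (simp add: s_def)
    have "nrm W (W.sc s y) < r" using r Y s by (simp add: W.nrm_sc s_def Y_def[symmetric])
    then obtain x' where x': "nrm V x' \<le> 2 * real n" "nrm W (add W (T x') (neg W (W.sc s y))) < s * \<epsilon>"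
      using base[of "W.sc s y" "s * \<epsilon>"] s eps by auto
    define x where "x = V.sc (1/s) x'"
    have "nrm V x = (1/s) * nrm V x'" using s by (simp add: x_def V.nrm_sc)
    also have "\<dots> \<le> (1/s) * (2 * real n)" using x' s by (intro mult_left_mono) auto
    also have "\<dots> = 4 * real n * Y / r" using s r Y by (simp add: s_def)
    also have "\<dots> \<le> (4 * real n + 1) * Y / r" using r Y by (intro divide_right_mono) auto
    also have "\<dots> = K * Y" by (simp add: K_def)
    finally have 1: "nrm V x \<le> K * nrm W y" by (simp add: Y_def)
    have "add W (T x) (neg W y) = W.sc (1/s) (add W (T x') (neg W (W.sc s y)))"
      using s by (simp add: x_def T_sc W.sc_sub W.sc_inv)
    then have "nrm W (add W (T x) (neg W y)) = (1/s) * nrm W (add W (T x') (neg W (W.sc s y)))"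
      using s by (simp add: W.nrm_sc)
    also have "\<dots> < (1/s) * (s * \<epsilon>)" using x'(2) s by (intro mult_strict_left_mono) auto
    also have "\<dots> = \<epsilon>" using s by simp
    finally show ?thesis using 1 by blast
  qed
  ultimately show ?thesis by blast
qed

end



lemma pow2_small: fixes A c :: real assumes "0 < c" "0 \<le> A" shows "\<exists>N. A / 2^N < c"
proof -
  have "0 < c/(A+1)" using assms by simp
  then obtain N where N: "(1/2::real)^N < c/(A+1)" using real_arch_pow_inv[of "c/(A+1)" "1/2"] by auto
  then have "(A+1) * (1/2)^N < c" using assms by (simp add: field_simps)
  moreover have "A/2^N \<le> (A+1) * (1/2)^N" by (simp add: power_one_over divide_right_mono)
  ultimately show ?thesis by (intro exI[of _ N]) linarith
qed

context qba2 begin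

lemma step2: "\<exists>C. \<forall>x. nrm V x \<le> C * nrm W (T x)"
proof -
  obtain K where K: "K > 0" "\<And>y \<epsilon>. \<epsilon> > 0 \<Longrightarrow> \<exists>x. nrm V x \<le> K * nrm W y \<and> nrm W (add W (T x) (neg W y)) < \<epsilon>"
    using step1 by blast
  have main: "\<exists>x. T x = y \<and> nrm V x \<le> 2 * K * nrm W y" for y
  proof (cases "y = zero W")
    case True
    then show ?thesis by (intro exI[of _ "zero V"]) (simp add: T_zero)
  next
    case False
    define Y where "Y = nrm W y"
    have Y: "Y > 0" using False W.nrm0[of y] W.nrm_nonneg[of y] unfolding Y_def by linarith
    define g where "g z k = (SOME x. nrm V x \<le> K * nrm W z \<and> nrm W (add W (T x) (neg W z)) < Y / 2^(Suc k))" for z k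
    have g: "nrm V (g z k) \<le> K * nrm W z \<and> nrm W (add W (T (g z k)) (neg W z)) < Y / 2^(Suc k)" for z k
    proof -
      have "Y / 2^(Suc k) > 0" using Y by simp
      from K(2)[OF this, of z] show ?thesis unfolding g_def by (rule someI_ex)
    qed
    define ys where "ys = rec_nat y (\<lambda>k z. add W z (neg W (T (g z k))))"
    have ys0: "ys 0 = y" and ysS: "ys (Suc k) = add W (ys k) (neg W (T (g (ys k) k)))" for k
      by (simp_all add: ys_def)
    define xs where "xs k = g (ys k) k" for k
    have ysb: "nrm W (ys k) \<le> Y / 2^k" for k
    proof (cases k)
      case 0
      then show ?thesis by (simp add: ys0 Y_def)
    next
      case (Suc j)
      have "nrm W (ys (Suc j)) = nrm W (add W (T (g (ys j) j)) (neg W (ys j)))"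
        unfolding ysS by (rule W.sub_comm)
      then show ?thesis using g[of "ys j" j] Suc by simp
    qed
    have xsb: "nrm V (xs k) \<le> K * Y / 2^k" for k
    proof -
      have "nrm V (xs k) \<le> K * nrm W (ys k)" using g by (simp add: xs_def)
      also have "\<dots> \<le> K * (Y / 2^k)" using ysb K by (intro mult_left_mono) auto
      finally show ?thesis by simp
    qed
    define ss where "ss = rec_nat (zero V) (\<lambda>k s. add V s (xs k))"
    have ss0: "ss 0 = zero V" and ssS: "ss (Suc k) = add V (ss k) (xs k)" for k
      by (simp_all add: ss_def)
    have Tss: "T (ss m) = add W y (neg W (ys m))" for m
    proof (induction m)
      case 0
      then show ?case by (simp add: ss0 ys0 T_zero W.negr)
    next
      case (Suc m)
      show ?case unfolding ssS ysS T_add Suc xs_def by (rule W.id2)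
    qed
    have cau: "nrm V (add V (ss m) (neg V (ss n))) \<le> 2 * K * Y * (1/2^n - 1/2^m)" if "n \<le> m" for m n
      using that
    proof (induction m rule: dec_induct)
      case base
      then show ?case by (simp add: V.negr)
    next
      case (step k)
      have "nrm V (add V (ss (Suc k)) (neg V (ss n))) = nrm V (add V (add V (ss k) (neg V (ss n))) (xs k))"
        unfolding ssS by (simp add: V.id3)
      also have "\<dots> \<le> nrm V (add V (ss k) (neg V (ss n))) + nrm V (xs k)" by (rule V.tri)
      also have "\<dots> \<le> 2 * K * Y * (1/2^n - 1/2^k) + K * Y / 2^k" using step.IH xsb[of k] by linarith
      also have "\<dots> = 2 * K * Y * (1/2^n - 1/2^(Suc k))" by (simp add: field_simps)
      finally show ?case .
    qed
    have ssb: "nrm V (ss m) \<le> 2 * K * Y" for m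
    proof -
      have "nrm V (ss m) \<le> 2 * K * Y * (1/2^0 - 1/2^m)" using cau[of 0 m] by (simp add: ss0 V.id5)
      also have "\<dots> \<le> 2 * K * Y" using K Y by (simp add: mult_le_cancel_left1)
      finally show ?thesis .
    qed
    have "\<forall>e>0. \<exists>N. \<forall>m\<ge>N. \<forall>n\<ge>N. nrm V (add V (ss m) (neg V (ss n))) < e"
    proof (intro allI impI)
      fix e :: real assume e: "e > 0"
      obtain N where N: "2 * K * Y / 2^N < e" using pow2_small[OF e, of "2*K*Y"] K Y by auto
      have *: "nrm V (add V (ss m) (neg V (ss n))) < e" if "N \<le> n" "n \<le> m" for m n
      proof -
        have "nrm V (add V (ss m) (neg V (ss n))) \<le> 2 * K * Y * (1/2^n - 1/2^m)" using cau that by blast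
        also have "\<dots> \<le> 2 * K * Y / 2^n" using K Y by (simp add: field_simps)
        also have "\<dots> \<le> 2 * K * Y / 2^N" using K Y that by (simp add: frac_le)
        finally show ?thesis using N by linarith
      qed
      show "\<exists>N. \<forall>m\<ge>N. \<forall>n\<ge>N. nrm V (add V (ss m) (neg V (ss n))) < e"
      proof (intro exI allI impI)
        fix m n assume "N \<le> m" "N \<le> n"
        then show "nrm V (add V (ss m) (neg V (ss n))) < e"
          using *[of n m] *[of m n] V.sub_comm[of "ss m" "ss n"] by (cases "n \<le> m") auto
      qed
    qed
    from V.complete[OF this] obtain l where l: "\<forall>e>0. \<exists>N. \<forall>n\<ge>N. nrm V (add V (ss n) (neg V l)) < e"
      by (elim exE)
    have Tl: "T l = y"
    proof (rule ccontr)
      assume ne: "T l \<noteq> y"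
      define D where "D = nrm W (add W y (neg W (T l)))"
      have D: "D > 0" using ne W.sub_eq0[of y "T l"] W.nrm0 W.nrm_nonneg unfolding D_def
        by (metis less_eq_real_def)
      obtain d where d: "d > 0" "\<And>z. qdist V z l < d \<Longrightarrow> qdist W (T z) (T l) < D/2"
        using contT D unfolding qcontinuous_def by (meson half_gt_zero)
      obtain N1 where N1: "\<And>n. n \<ge> N1 \<Longrightarrow> nrm V (add V (ss n) (neg V l)) < d" using l d by blast
      obtain N2 where N2: "Y / 2^N2 < D/2" using pow2_small[of "D/2" Y] D Y by auto
      define m where "m = max N1 N2"
      have "qdist W (T (ss m)) (T l) < D/2" using d(2) N1[of m] unfolding qdist_def m_def by simp
      then have a: "nrm W (add W (add W y (neg W (ys m))) (neg W (T l))) < D/2" by (simp add: Tss qdist_def)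
      have "nrm W (ys m) \<le> Y / 2^m" by (rule ysb)
      also have "\<dots> \<le> Y / 2^N2" using Y by (simp add: frac_le m_def)
      finally have b: "nrm W (ys m) < D/2" using N2 by linarith
      have "D \<le> nrm W (add W y (neg W (add W y (neg W (ys m))))) + nrm W (add W (add W y (neg W (ys m))) (neg W (T l)))"
        unfolding D_def by (rule W.tri_sub)
      then have "D \<le> nrm W (ys m) + nrm W (add W (add W y (neg W (ys m))) (neg W (T l)))" by (simp add: W.id4)
      then show False using a b by linarith
    qed
    have "nrm V l \<le> 2 * K * Y"
    proof (rule ccontr)
      assume "\<not> ?thesis"
      then have e: "nrm V l - 2 * K * Y > 0" by simp
      obtain N where N: "nrm V (add V (ss N) (neg V l)) < nrm V l - 2 * K * Y" using l e by blast
      have "nrm V (add V l (neg V (zero V))) \<le> nrm V (add V l (neg V (ss N))) + nrm V (add V (ss N) (neg V (zero V)))"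
        by (rule V.tri_sub)
      then have "nrm V l \<le> nrm V (add V (ss N) (neg V l)) + nrm V (ss N)"
        by (simp add: V.id5 V.sub_comm[of l "ss N"])
      then show False using N ssb[of N] by linarith
    qed
    then show ?thesis using Tl by (auto simp: Y_def)
  qed
  have "nrm V x \<le> 2 * K * nrm W (T x)" for x
  proof -
    obtain x' where "T x' = T x" "nrm V x' \<le> 2 * K * nrm W (T x)" using main by blast
    moreover have "x' = x" using bijT calculation(1) by (simp add: bij_def inj_eq)
    ultimately show ?thesis by simp
  qed
  then show ?thesis by blast
qed

end



lemma bd_map:
  assumes c: "qcontinuous A B f" and s: "\<And>y. y \<in> S \<longleftrightarrow> f y \<in> S'" and x: "x \<in> qboundary A S"
  shows "f x \<in> qboundary B S'"
  unfolding qboundary_def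
proof (intro CollectI allI impI conjI)
  fix e :: real assume e: "e > 0"
  obtain d where d: "d > 0" "\<And>y. qdist A y x < d \<Longrightarrow> qdist B (f y) (f x) < e"
    using c e unfolding qcontinuous_def by blast
  from x d(1) obtain y1 y2 where "y1 \<in> S" "qdist A y1 x < d" "y2 \<notin> S" "qdist A y2 x < d"
    unfolding qboundary_def by blast
  then show "\<exists>y\<in>S'. qdist B y (f x) < e" "\<exists>y. y \<notin> S' \<and> qdist B y (f x) < e"
    using d s by blast+
qed

context qba2 begin

lemma T_mul: "T (mul V x y) = mul W (T x) (T y)" using hom by (simp add: qhom_def)
lemma T_one: "T (one V) = one W" using hom by (simp add: qhom_def)
lemma T_inj: "T x = T y \<longleftrightarrow> x = y" using bijT by (simp add: bij_def inj_eq)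
lemma T_surj: "\<exists>x. y = T x" using bijT unfolding bij_def surj_def by blast

lemma T_inv: "x \<in> qinvertibles V \<longleftrightarrow> T x \<in> qinvertibles W"
proof
  assume "x \<in> qinvertibles V"
  then obtain y where "mul V x y = one V" "mul V y x = one V" unfolding qinvertibles_def by blast
  then show "T x \<in> qinvertibles W" unfolding qinvertibles_def
    by (intro CollectI exI[of _ "T y"]) (simp add: T_mul[symmetric] T_one)
next
  assume "T x \<in> qinvertibles W"
  then obtain w where w: "mul W (T x) w = one W" "mul W w (T x) = one W" unfolding qinvertibles_def by blast
  obtain y where y: "w = T y" using T_surj by blast
  have "mul V x y = one V" "mul V y x = one V"
    using w unfolding y by (simp_all add: T_mul[symmetric] T_one[symmetric] T_inj)
  then show "x \<in> qinvertibles V" unfolding qinvertibles_def by blast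
qed

lemma T_lsc: "T (lsc V q x) = lsc W q (T x)" using hom by (simp add: qhom_def)
lemma T_Rq: "T (qRq V q v) = qRq W q (T v)"
  unfolding qRq_def by (simp add: T_add T_neg T_mul T_one T_lsc)

lemma inv_cont: "qcontinuous W V (inv T)"
proof -
  obtain C where C: "\<And>x. nrm V x \<le> C * nrm W (T x)" using step2 by blast
  have Tg: "T (inv T y) = y" for y using bijT by (simp add: bij_is_surj surj_f_inv_f)
  show ?thesis unfolding qcontinuous_def
  proof (intro allI impI)
    fix x :: 'w and e :: real assume e: "e > 0"
    show "\<exists>d>0. \<forall>y. qdist W y x < d \<longrightarrow> qdist V (inv T y) (inv T x) < e"
    proof (intro exI[of _ "e / (\<bar>C\<bar> + 1)"] conjI allI impI)
      show "e / (\<bar>C\<bar> + 1) > 0" using e by simp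
      fix y assume y: "qdist W y x < e / (\<bar>C\<bar> + 1)"
      have "qdist V (inv T y) (inv T x) \<le> C * qdist W y x"
        using C[of "add V (inv T y) (neg V (inv T x))"] unfolding qdist_def by (simp add: T_sub Tg)
      also have "\<dots> \<le> \<bar>C\<bar> * qdist W y x"
        using W.nrm_nonneg unfolding qdist_def by (simp add: mult_right_mono)
      also have "\<dots> \<le> (\<bar>C\<bar> + 1) * qdist W y x"
        using W.nrm_nonneg unfolding qdist_def by (simp add: mult_right_mono)
      also have "\<dots> < (\<bar>C\<bar> + 1) * (e / (\<bar>C\<bar> + 1))"
        using y by (intro mult_strict_left_mono) auto
      also have "\<dots> = e" by simp
      finally show "qdist V (inv T y) (inv T x) < e" .
    qed
  qed
qed

lemma bd_iff: "x \<in> qboundary V (UNIV - qinvertibles V) \<longleftrightarrow> T x \<in> qboundary W (UNIV - qinvertibles W)"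
proof
  have s: "\<And>y. y \<in> UNIV - qinvertibles V \<longleftrightarrow> T y \<in> UNIV - qinvertibles W" by (simp add: T_inv)
  assume "x \<in> qboundary V (UNIV - qinvertibles V)"
  then show "T x \<in> qboundary W (UNIV - qinvertibles W)"
    by (rule bd_map[OF contT s])
next
  have Tg: "T (inv T y) = y" for y using bijT by (simp add: bij_is_surj surj_f_inv_f)
  have gT: "inv T (T y) = y" for y using bijT by (simp add: bij_is_inj)
  assume "T x \<in> qboundary W (UNIV - qinvertibles W)"
  have s: "\<And>y. y \<in> UNIV - qinvertibles W \<longleftrightarrow> inv T y \<in> UNIV - qinvertibles V"
  proof -
    fix y show "y \<in> UNIV - qinvertibles W \<longleftrightarrow> inv T y \<in> UNIV - qinvertibles V"
      using T_inv[of "inv T y"] Tg[of y] by simp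
  qed
  from \<open>T x \<in> qboundary W (UNIV - qinvertibles W)\<close> have "inv T (T x) \<in> qboundary V (UNIV - qinvertibles V)"
    by (rule bd_map[OF inv_cont s])
  then show "x \<in> qboundary V (UNIV - qinvertibles V)" by (simp add: gT)
qed

end

theorem mainTheorem8:
  fixes V :: "'v qalg" and W :: "'w qalg" and A :: "'v \<Rightarrow> 'w"
  assumes "qbanach_alg V" and "qbanach_alg W"
    and "qiso V W A" and "qcontinuous V W A"
  shows "\<forall>v. BSd V v = BSd W (A v) \<and>
             BSd W (A v) = (\<Union>c\<in>{c. A c = zero W}. BSd V (add V v c))"
proof -
  interpret qba2 V W A
    using assms by (simp add: qba2_def qba2_axioms_def qba_def qiso_def)
  have 1: "BSd V v = BSd W (A v)" for v
    unfolding BSd_def by (simp add: bd_iff T_Rq)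
  have "{c. A c = zero W} = {zero V}"
  proof (intro set_eqI)
    fix c show "c \<in> {c. A c = zero W} \<longleftrightarrow> c \<in> {zero V}" using T_inj[of c "zero V"] T_zero by auto
  qed
  then have 2: "(\<Union>c\<in>{c. A c = zero W}. BSd V (add V v c)) = BSd V v" for v by (simp add: V.zr)
  show ?thesis using 1 2 by simp
qed


end
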